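(* Let $n\ge1$, $\varepsilon\in D$, $s\in D^n$, and let $\mu^{(n)}$, $e_n$ and $n'$ be as in the recursive construction below. If $g\in D[x]$ is zero or satisfies $\deg g\le -e_n$, then $\mu^{(n)}+g\,\mu^{(n')}\in\mathrm{Min}(s)$. In particular, if $e_n\le 0$ then $s$ has more than one minimal polynomial, i.e. $|\mathrm{Min}(s)|>1$.
   Context: Let $D$ be a commutative integral domain with $1\neq 0$. For $s=(s_1,\dots,s_n)\in D^n$ put $\underline{s}=s_1x^{-1}+\cdots+s_nx^{-n}\in D[x,x^{-1}]$; for a Laurent polynomial $F$, $F_k$ is the coefficient of $x^k$; $s^{(i)}=(s_1,\dots,s_i)$. A polynomial $f\in D[x]$ is an annihilator of $s$ if $f=0$, or $d=\deg f\ge0$ and $(f\cdot\underline{s})_{d-j}=0$ for $d+1\le j\le n$. $\mathrm{Min}(s)$ is the set of nonzero annihilators of least degree. For nonzero $f\in D[x]$ and $t\in D^m$, $\Delta(f,t)=(f\cdot\underline{t})_{\deg f-m}$. Recursive construction (relative to a fixed $\varepsilon\in D$): put $\mu^{(-1)}=\varepsilon$, $\mu^{(0)}=1$, $\Delta_0=1$, $0'=-1$, and for $j\ge 0$ let $e_j=j+1-2\deg\mu^{(j)}$ (so $e_0=1$). For $j=1,\dots,n$ successively define: $\Delta_j=\Delta(\mu^{(j-1)},s^{(j)})$; the index $j'=(j-1)'$ if $\Delta_j=0$ or $e_{j-1}\le 0$, and $j'=j-1$ if $\Delta_j\neq0$ and $e_{j-1}>0$; $\Delta'_j=\Delta_{(j-1)'+1}$;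 and $\mu^{(j)}=\mu^{(j-1)}$ if $\Delta_j=0$, otherwise $\mu^{(j)}=\Delta'_j\,x^{\max\{e_{j-1},0\}}\mu^{(j-1)}-\Delta_j\,x^{\max\{-e_{j-1},0\}}\mu^{((j-1)')}$. *)

theory Defs
  imports "HOL-Computational_Algebra.Polynomial"
begin

text \<open>A sequence s in D^n is represented by a function s :: nat => 'a together with
  the length n; only the values s 1, ..., s n are relevant.
  The prefix s^(i) is represented by the same function with length i.\<close>

text \<open>Coefficient of x^k in the Laurent polynomial f * (s_1 x^-1 + ... + s_n x^-n).\<close>
definition lcoef :: "(nat \<Rightarrow> 'a::comm_ring_1) \<Rightarrow> nat \<Rightarrow> 'a poly \<Rightarrow> int \<Rightarrow> 'a" where
  "lcoef s n f k = (\<Sum>i\<le>degree f. coeff f i *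
      (if 1 \<le> int i - k \<and> int i - k \<le> int n then s (nat (int i - k)) else 0))"

definition annihilator :: "(nat \<Rightarrow> 'a::comm_ring_1) \<Rightarrow> nat \<Rightarrow> 'a poly \<Rightarrow> bool" where
  "annihilator s n f \<longleftrightarrow> f = 0 \<or>
     (\<forall>j. degree f + 1 \<le> j \<and> j \<le> n \<longrightarrow> lcoef s n f (int (degree f) - int j) = 0)"

definition MinPolys :: "(nat \<Rightarrow> 'a::comm_ring_1) \<Rightarrow> nat \<Rightarrow> 'a poly set" where
  "MinPolys s n = {f. f \<noteq> 0 \<and> annihilator s n f \<and>
       (\<forall>h. h \<noteq> 0 \<and> annihilator s n h \<longrightarrow> degree f \<le> degree h)}"

definition Discr :: "'a::comm_ring_1 poly \<Rightarrow> (nat \<Rightarrow> 'a) \<Rightarrow> nat \<Rightarrow> 'a" where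
  "Discr f s m = lcoef s m f (int (degree f) - int m)"

text \<open>State after step j of the recursive construction:
  (mu^(j), mu^(j'), Delta_(j'+1), j').  Initially (j = 0): (1, eps, Delta_0 = 1, 0' = -1).\<close>
fun bm_state :: "(nat \<Rightarrow> 'a::comm_ring_1) \<Rightarrow> 'a \<Rightarrow> nat \<Rightarrow> 'a poly \<times> 'a poly \<times> 'a \<times> int" where
  "bm_state s eps 0 = (1, [:eps:], 1, -1)"
| "bm_state s eps (Suc k) =
     (let (mu, mup, Dp, jp) = bm_state s eps k;
          j = Suc k;
          Dj = Discr mu s j;
          e = int k + 1 - 2 * int (degree mu)
      in if Dj = 0 then (mu, mup, Dp, jp)
         else if e > 0 then
           (smult Dp (monom 1 (nat e) * mu) - smult Dj mup, mu, Dj, int k)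
         else
           (smult Dp mu - smult Dj (monom 1 (nat (- e)) * mup), mup, Dp, jp))"

definition bm_mu :: "(nat \<Rightarrow> 'a::comm_ring_1) \<Rightarrow> 'a \<Rightarrow> nat \<Rightarrow> 'a poly" where
  "bm_mu s eps j = fst (bm_state s eps j)"

definition bm_mu_int :: "(nat \<Rightarrow> 'a::comm_ring_1) \<Rightarrow> 'a \<Rightarrow> int \<Rightarrow> 'a poly" where
  "bm_mu_int s eps j = (if j < 0 then [:eps:] else bm_mu s eps (nat j))"

definition bm_jprime :: "(nat \<Rightarrow> 'a::comm_ring_1) \<Rightarrow> 'a \<Rightarrow> nat \<Rightarrow> int" where
  "bm_jprime s eps j = snd (snd (snd (bm_state s eps j)))"

definition bm_e :: "(nat \<Rightarrow> 'a::comm_ring_1) \<Rightarrow> 'a \<Rightarrow> nat \<Rightarrow> int" where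
  "bm_e s eps j = int j + 1 - 2 * int (degree (bm_mu s eps j))"

end

theory Submission
  imports Defs
begin


definition SS :: "(nat \<Rightarrow> 'a::comm_ring_1) \<Rightarrow> int \<Rightarrow> 'a" where
  "SS s m = (if 1 \<le> m then s (nat m) else 0)"

definition EE :: "(nat \<Rightarrow> 'a::comm_ring_1) \<Rightarrow> 'a poly \<Rightarrow> int \<Rightarrow> 'a" where
  "EE s f m = (\<Sum>i\<le>degree f. coeff f i * SS s (int i + m))"

definition ann :: "(nat \<Rightarrow> 'a::comm_ring_1) \<Rightarrow> nat \<Rightarrow> 'a poly \<Rightarrow> bool" where
  "ann s n f \<longleftrightarrow> (\<forall>t. degree f + 1 \<le> t \<and> t \<le> n \<longrightarrow> EE s f (int t - int (degree f)) = 0)"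

lemma EE_bound: "degree f \<le> N \<Longrightarrow> EE s f m = (\<Sum>i\<le>N. coeff f i * SS s (int i + m))"
  unfolding EE_def by (rule sum.mono_neutral_left) (auto simp: coeff_eq_0)

lemma EE_add: "EE s (p + q) m = EE s p m + EE s q m"
proof -
  let ?N = "max (degree p) (degree q)"
  have "degree (p+q) \<le> ?N" by (rule degree_add_le_max)
  then show ?thesis
    by (simp add: EE_bound[of _ ?N] sum.distrib algebra_simps)
qed

lemma EE_diff: "EE s (p - q) m = EE s p m - EE s q m"
proof -
  let ?N = "max (degree p) (degree q)"
  have "degree (p-q) \<le> ?N" by (rule degree_diff_le_max)
  then show ?thesis
    by (simp add: EE_bound[of _ ?N] sum_subtractf algebra_simps)
qed

lemma EE_smult: "EE s (smult c p) m = c * EE s p m"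
proof -
  have "degree (smult c p) \<le> degree p" by (rule degree_smult_le)
  then show ?thesis
    by (simp add: EE_bound[of _ "degree p"] sum_distrib_left algebra_simps)
qed

lemma EE_0[simp]: "EE s 0 m = 0"
  by (simp add: EE_def)

lemma EE_pCons: "EE s (pCons a p) m = a * SS s m + EE s p (m + 1)"
proof -
  have "degree (pCons a p) \<le> Suc (degree p)" by (simp add: degree_pCons_le)
  then have "EE s (pCons a p) m = (\<Sum>i\<le>Suc (degree p). coeff (pCons a p) i * SS s (int i + m))"
    by (rule EE_bound)
  also have "\<dots> = a * SS s m + (\<Sum>i\<le>degree p. coeff p i * SS s (int i + (m+1)))"
    by (subst sum.atMost_Suc_shift) (simp add: algebra_simps)
  finally show ?thesis by (simp add: EE_def)
qed

lemma EE_monom_mult: "EE s (monom 1 k * p) m = EE s p (m + int k)"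
proof (induction k arbitrary: m)
  case 0 then show ?case by simp
next
  case (Suc k)
  have "monom 1 (Suc k) * p = pCons 0 (monom 1 k * p)" by (simp add: monom_Suc)
  then show ?case using Suc by (simp add: EE_pCons algebra_simps)
qed

lemma EE_mult_zero: "(\<And>k. k \<le> degree g \<Longrightarrow> EE s p (m + int k) = 0) \<Longrightarrow> EE s (g * p) m = 0"
proof (induction g arbitrary: m)
  case 0 then show ?case by simp
next
  case (pCons a g)
  show ?case
  proof (cases "g = 0")
    case True
    then show ?thesis using pCons.prems[of 0] by (simp add: EE_smult)
  next
    case False
    then have dg: "degree (pCons a g) = Suc (degree g)" by simp
    have "EE s (g * p) (m + 1) = 0"
      using pCons.IH[of "m+1"] pCons.prems[of "Suc _"] dg by (simp add: algebra_simps)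
    then show ?thesis using pCons.prems[of 0] by (simp add: EE_smult EE_add EE_pCons)
  qed
qed

lemma EE_swap: "(\<Sum>k\<le>degree h. coeff h k * EE s f (int k + c)) = (\<Sum>i\<le>degree f. coeff f i * EE s h (int i + c))"
proof -
  have "(\<Sum>k\<le>degree h. coeff h k * EE s f (int k + c)) =
     (\<Sum>k\<le>degree h. \<Sum>i\<le>degree f. coeff h k * coeff f i * SS s (int i + int k + c))"
    by (simp add: EE_def sum_distrib_left algebra_simps)
  also have "\<dots> = (\<Sum>i\<le>degree f. \<Sum>k\<le>degree h. coeff h k * coeff f i * SS s (int i + int k + c))"
    by (rule sum.swap)
  also have "\<dots> = (\<Sum>i\<le>degree f. coeff f i * EE s h (int i + c))"
    by (simp add: EE_def sum_distrib_left algebra_simps)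
  finally show ?thesis .
qed

lemma lcoef_EE: "int (degree f) - int n \<le> k \<Longrightarrow> lcoef s n f k = EE s f (-k)"
  unfolding lcoef_def EE_def SS_def
  by (rule sum.cong) auto

lemma Discr_EE: "Discr f s j = EE s f (int j - int (degree f))"
  unfolding Discr_def by (subst lcoef_EE) auto

lemma annihilator_iff: "annihilator s n f \<longleftrightarrow> f = 0 \<or> ann s n f"
  unfolding annihilator_def ann_def
  by (auto simp: lcoef_EE)



lemma massey:
  fixes f h :: "'a::idom poly"
  assumes af: "ann s k f"
  and nz: "EE s f (int (Suc k) - int (degree f)) \<noteq> 0"
  and hnz: "h \<noteq> 0" and ah: "ann s (Suc k) h"
  shows "Suc k \<le> degree f + degree h"
proof (rule ccontr)
  assume A: "\<not> Suc k \<le> degree f + degree h"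
  define c where "c = int (Suc k) - int (degree f) - int (degree h)"
  have c1: "c \<ge> 1" using A by (simp add: c_def)
  have R: "(\<Sum>i\<le>degree f. coeff f i * EE s h (int i + c)) = 0"
  proof (rule sum.neutral, rule ballI)
    fix i assume i: "i \<in> {..degree f}"
    define t where "t = nat (int i + c + int (degree h))"
    have "degree h + 1 \<le> t \<and> t \<le> Suc k" using i c1 by (auto simp: t_def c_def)
    then have "EE s h (int t - int (degree h)) = 0" using ah by (simp add: ann_def)
    moreover have "int t - int (degree h) = int i + c" using c1 by (simp add: t_def)
    ultimately show "coeff f i * EE s h (int i + c) = 0" by simp
  qed
  have Z: "(\<Sum>i<degree h. coeff h i * EE s f (int i + c)) = 0"
  proof (rule sum.neutral, rule ballI)
    fix i assume i: "i \<in> {..<degree h}"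
    define t where "t = nat (int i + c + int (degree f))"
    have "degree f + 1 \<le> t \<and> t \<le> k" using i c1 by (auto simp: t_def c_def)
    then have "EE s f (int t - int (degree f)) = 0" using af by (simp add: ann_def)
    moreover have "int t - int (degree f) = int i + c" using c1 by (simp add: t_def)
    ultimately show "coeff h i * EE s f (int i + c) = 0" by simp
  qed
  have "(\<Sum>i\<le>degree h. coeff h i * EE s f (int i + c)) =
        (\<Sum>i<degree h. coeff h i * EE s f (int i + c)) + coeff h (degree h) * EE s f (int (degree h) + c)"
    by (simp add: lessThan_Suc_atMost[symmetric])
  also have "\<dots> = coeff h (degree h) * EE s f (int (Suc k) - int (degree f))"
    using Z by (simp add: c_def algebra_simps)
  finally have "coeff h (degree h) * EE s f (int (Suc k) - int (degree f)) = 0"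
    using R EE_swap[of h s f c] by simp
  with hnz nz show False by simp
qed



lemma degree_diff_eq_left': fixes p q :: "'a::ab_group_add poly"
  shows "degree q < degree p \<Longrightarrow> degree (p - q) = degree p"
  using degree_add_eq_left[of "- q" p] by simp

lemma comb_zero:
  fixes mu mup :: "'a::idom poly"
  assumes amu: "ann s k mu"
    and jp0: "0 \<le> jp" and jpk: "jp \<le> int k - 1"
    and dsum: "int (degree mu) + int (degree mup) = jp + 1"
    and amup: "ann s (nat jp) mup" and emup: "EE s mup (jp + 1 - int (degree mup)) = Dp"
    and Dj: "Dj = EE s mu (int (Suc k) - int (degree mu))"
    and t1: "degree mu + 1 \<le> t" and t2: "t \<le> Suc k"
    and t3: "int t - int k + jp \<ge> int (degree mup) + 1"
  shows "Dp * EE s mu (int t - int (degree mu)) - Dj * EE s mup (int t - int k + jp - int (degree mup)) = 0"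
proof (cases "t = Suc k")
  case True
  then show ?thesis using Dj emup by (simp add: algebra_simps)
next
  case False
  with t2 have tk: "t \<le> k" by simp
  have "EE s mu (int t - int (degree mu)) = 0" using amu t1 tk by (simp add: ann_def)
  moreover
  define t' where "t' = nat (int t - int k + jp)"
  have "degree mup + 1 \<le> t' \<and> t' \<le> nat jp" using t3 tk by (auto simp: t'_def)
  then have "EE s mup (int t' - int (degree mup)) = 0" using amup by (simp add: ann_def)
  moreover have "int t' = int t - int k + jp" using t3 by (simp add: t'_def)
  ultimately show ?thesis by simp
qed

lemma case_swap:
  fixes mu mup :: "'a::idom poly"
  assumes munz: "mu \<noteq> 0" and amu: "ann s k mu" and Dpnz: "Dp \<noteq> 0"
    and jpm: "-1 \<le> jp" and jpk: "jp \<le> int k - 1"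
    and dsum: "int (degree mu) + int (degree mup) = jp + 1"
    and mupI: "0 \<le> jp \<longrightarrow> ann s (nat jp) mup \<and> EE s mup (jp + 1 - int (degree mup)) = Dp"
    and Dj: "Dj = EE s mu (int (Suc k) - int (degree mu))"
    and e: "e = int k + 1 - 2 * int (degree mu)" and epos: "e > 0"
    and nu: "nu = smult Dp (monom 1 (nat e) * mu) - smult Dj mup"
  shows "int (degree nu) = int (Suc k) - int (degree mu)" "nu \<noteq> 0" "ann s (Suc k) nu"
proof -
  let ?a = "smult Dp (monom 1 (nat e) * mu)"
  have da: "degree ?a = nat e + degree mu" using Dpnz munz by (simp add: degree_mult_eq degree_monom_eq)
  have d1: "degree (smult Dj mup) \<le> degree mup" by (rule degree_smult_le)
  have d2: "int (degree mup) < int (nat e + degree mu)" using dsum jpk e epos by simp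
  have "degree (smult Dj mup) < degree ?a" using d1 d2 da by linarith
  then have dnu: "degree nu = degree ?a" unfolding nu by (rule degree_diff_eq_left')
  then show dn: "int (degree nu) = int (Suc k) - int (degree mu)" using da e epos by simp
  then show "nu \<noteq> 0" using e epos by auto
  show "ann s (Suc k) nu"
    unfolding ann_def
  proof (intro allI impI)
    fix t assume t: "degree nu + 1 \<le> t \<and> t \<le> Suc k"
    have jp0: "0 \<le> jp"
    proof (rule ccontr)
      assume "\<not> 0 \<le> jp"
      then have "degree mu = 0" using jpm dsum by simp
      then show False using t dn by simp
    qed
    have EEnu: "EE s nu (int t - int (degree nu)) =
       Dp * EE s mu (int t - int (degree nu) + int (nat e)) - Dj * EE s mup (int t - int (degree nu))"
      unfolding nu by (simp add: EE_diff EE_smult EE_monom_mult)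
    have x1: "int t - int (degree nu) + int (nat e) = int t - int (degree mu)" using dn e epos by simp
    have x2: "int t - int (degree nu) = int t - int k + jp - int (degree mup)" using dn dsum by simp
    have "Dp * EE s mu (int t - int (degree mu)) - Dj * EE s mup (int t - int k + jp - int (degree mup)) = 0"
      apply (rule comb_zero[OF amu jp0 jpk dsum _ _ Dj])
      using mupI jp0 t dn dsum e epos by auto
    moreover have "EE s nu (int t - int (degree nu)) = Dp * EE s mu (int t - int (degree mu)) - Dj * EE s mup (int t - int k + jp - int (degree mup))"
      using EEnu x1 x2 by metis
    ultimately show "EE s nu (int t - int (degree nu)) = 0" by simp
  qed
qed

lemma case_noswap:
  fixes mu mup :: "'a::idom poly"
  assumes munz: "mu \<noteq> 0" and amu: "ann s k mu" and Dpnz: "Dp \<noteq> 0"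
    and jpm: "-1 \<le> jp" and jpk: "jp \<le> int k - 1"
    and dsum: "int (degree mu) + int (degree mup) = jp + 1"
    and mupI: "0 \<le> jp \<longrightarrow> ann s (nat jp) mup \<and> EE s mup (jp + 1 - int (degree mup)) = Dp"
    and Dj: "Dj = EE s mu (int (Suc k) - int (degree mu))"
    and e: "e = int k + 1 - 2 * int (degree mu)" and eneg: "\<not> e > 0"
    and nu: "nu = smult Dp mu - smult Dj (monom 1 (nat (- e)) * mup)"
  shows "degree nu = degree mu" "nu \<noteq> 0" "ann s (Suc k) nu"
proof -
  have jp0: "0 \<le> jp" using e eneg dsum by linarith
  let ?b = "smult Dj (monom 1 (nat (- e)) * mup)"
  have "degree ?b \<le> degree (monom 1 (nat (- e)) * mup)" by (rule degree_smult_le)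
  also have "\<dots> \<le> degree (monom (1::'a) (nat (- e))) + degree mup" by (rule degree_mult_le)
  also have "\<dots> = nat (-e) + degree mup" by (simp add: degree_monom_eq)
  finally have "int (degree ?b) \<le> int (nat (-e)) + int (degree mup)" by linarith
  also have "\<dots> < int (degree mu)" using e eneg dsum jpk by simp
  finally have "degree ?b < degree (smult Dp mu)" using Dpnz by simp
  then have dnu: "degree nu = degree (smult Dp mu)" unfolding nu by (rule degree_diff_eq_left')
  then show dn: "degree nu = degree mu" using Dpnz by simp
  show "nu \<noteq> 0"
  proof
    assume "nu = 0"
    then have "degree mu = 0" using dn by simp
    then show False using e eneg by simp
  qed
  show "ann s (Suc k) nu"
    unfolding ann_def
  proof (intro allI impI)
    fix t assume t: "degree nu + 1 \<le> t \<and> t \<le> Suc k"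
    have EEnu: "EE s nu (int t - int (degree nu)) =
       Dp * EE s mu (int t - int (degree nu)) - Dj * EE s mup (int t - int (degree nu) + int (nat (- e)))"
      unfolding nu by (simp add: EE_diff EE_smult EE_monom_mult)
    have x2: "int t - int (degree nu) + int (nat (- e)) = int t - int k + jp - int (degree mup)"
      using dn dsum e eneg by simp
    have "Dp * EE s mu (int t - int (degree mu)) - Dj * EE s mup (int t - int k + jp - int (degree mup)) = 0"
      apply (rule comb_zero[OF amu jp0 jpk dsum _ _ Dj])
      using mupI jp0 t dn dsum e eneg by auto
    moreover have "EE s nu (int t - int (degree nu)) = Dp * EE s mu (int t - int (degree mu)) - Dj * EE s mup (int t - int k + jp - int (degree mup))"
      using EEnu x2 dn by metis
    ultimately show "EE s nu (int t - int (degree nu)) = 0" by simp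
  qed
qed



definition inv :: "(nat \<Rightarrow> 'a::idom) \<Rightarrow> 'a \<Rightarrow> nat \<Rightarrow> bool" where
  "inv s eps k \<longleftrightarrow> (case bm_state s eps k of (mu, mup, Dp, jp) \<Rightarrow>
     mu \<noteq> 0 \<and> ann s k mu \<and> Dp \<noteq> 0 \<and> -1 \<le> jp \<and> jp \<le> int k - 1 \<and>
     int (degree mu) + int (degree mup) = jp + 1 \<and> mup = bm_mu_int s eps jp \<and>
     (0 \<le> jp \<longrightarrow> ann s (nat jp) mup \<and> EE s mup (jp + 1 - int (degree mup)) = Dp) \<and>
     (\<forall>h. h \<noteq> 0 \<longrightarrow> ann s k h \<longrightarrow> degree mu \<le> degree h))"

lemma ann_Suc: "ann s (Suc k) h \<Longrightarrow> ann s k h"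
  by (simp add: ann_def)

lemma inv_0: "inv s eps 0"
  by (simp add: inv_def ann_def bm_mu_int_def)

lemma inv_step:
  assumes IH: "inv s eps k" shows "inv s eps (Suc k)"
proof -
  obtain mu mup Dp jp where st: "bm_state s eps k = (mu, mup, Dp, jp)" by (cases "bm_state s eps k") auto
  from IH st have munz: "mu \<noteq> 0" and amu: "ann s k mu" and Dpnz: "Dp \<noteq> 0"
    and jpm: "-1 \<le> jp" and jpk: "jp \<le> int k - 1"
    and dsum: "int (degree mu) + int (degree mup) = jp + 1"
    and mupd: "mup = bm_mu_int s eps jp"
    and mupI: "0 \<le> jp \<longrightarrow> ann s (nat jp) mup \<and> EE s mup (jp + 1 - int (degree mup)) = Dp"
    and minim: "\<And>h. h \<noteq> 0 \<Longrightarrow> ann s k h \<Longrightarrow> degree mu \<le> degree h"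
    by (auto simp: inv_def)
  have mueq: "bm_mu s eps k = mu" using st by (simp add: bm_mu_def)
  define Dj where "Dj = Discr mu s (Suc k)"
  define e where "e = int k + 1 - 2 * int (degree mu)"
  have DjE: "Dj = EE s mu (int (Suc k) - int (degree mu))" by (simp add: Dj_def Discr_EE)
  have stS: "bm_state s eps (Suc k) = (if Dj = 0 then (mu, mup, Dp, jp) else if e > 0 then
      (smult Dp (monom 1 (nat e) * mu) - smult Dj mup, mu, Dj, int k) else
      (smult Dp mu - smult Dj (monom 1 (nat (- e)) * mup), mup, Dp, jp))"
    by (simp add: st Dj_def e_def Let_def)
  show ?thesis
  proof (cases "Dj = 0")
    case True
    have "ann s (Suc k) mu" using amu True DjE by (auto simp: ann_def le_Suc_eq)
    moreover have "degree mu \<le> degree h" if "h \<noteq> 0" "ann s (Suc k) h" for h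
      using minim[OF that(1) ann_Suc[OF that(2)]] .
    ultimately show ?thesis using True stS munz Dpnz jpm jpk dsum mupd mupI
      by (simp add: inv_def)
  next
    case False
    show ?thesis
    proof (cases "e > 0")
      case True
      define nu where "nu = smult Dp (monom 1 (nat e) * mu) - smult Dj mup"
      note cs = case_swap[OF munz amu Dpnz jpm jpk dsum mupI DjE e_def True nu_def]
      have mm: "degree nu \<le> degree h" if "h \<noteq> 0" "ann s (Suc k) h" for h
        using massey[OF amu _ that] False DjE cs(1) by simp
      have mk: "bm_mu_int s eps (int k) = mu" using mueq by (simp add: bm_mu_int_def)
      have ns: "bm_state s eps (Suc k) = (nu, mu, Dj, int k)" using stS False True by (simp add: nu_def)
      have e2: "EE s mu (int k + 1 - int (degree mu)) = Dj" using DjE by (simp add: algebra_simps)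
      show ?thesis unfolding inv_def ns prod.case
        using cs False amu mm mk e2 by auto
    next
      case eneg: False
      define nu where "nu = smult Dp mu - smult Dj (monom 1 (nat (- e)) * mup)"
      note cs = case_noswap[OF munz amu Dpnz jpm jpk dsum mupI DjE e_def eneg nu_def]
      have mm: "degree nu \<le> degree h" if "h \<noteq> 0" "ann s (Suc k) h" for h
        using minim[OF that(1) ann_Suc[OF that(2)]] cs(1) by simp
      have ns: "bm_state s eps (Suc k) = (nu, mup, Dp, jp)" using stS False eneg by (simp add: nu_def)
      show ?thesis unfolding inv_def ns prod.case
        using cs mm Dpnz jpm jpk dsum mupd mupI by auto
    qed
  qed
qed

lemma inv_all: "inv s eps k"
  by (induction k) (auto intro: inv_0 inv_step)



lemma state_facts:
  fixes s :: "nat \<Rightarrow> 'a::idom"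
  obtains mu mup Dp jp where "bm_mu s eps n = mu" "bm_jprime s eps n = jp"
    "bm_mu_int s eps jp = mup" "bm_e s eps n = int n + 1 - 2 * int (degree mu)"
    "mu \<noteq> 0" "ann s n mu" "Dp \<noteq> 0" "-1 \<le> jp" "jp \<le> int n - 1"
    "int (degree mu) + int (degree mup) = jp + 1"
    "0 \<le> jp \<longrightarrow> ann s (nat jp) mup \<and> EE s mup (jp + 1 - int (degree mup)) = Dp"
    "\<And>h. h \<noteq> 0 \<Longrightarrow> ann s n h \<Longrightarrow> degree mu \<le> degree h"
proof -
  obtain mu mup Dp jp where st: "bm_state s eps n = (mu, mup, Dp, jp)" by (cases "bm_state s eps n") auto
  have I: "inv s eps n" by (rule inv_all)
  have a: "bm_mu s eps n = mu" "bm_jprime s eps n = jp"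
    "bm_e s eps n = int n + 1 - 2 * int (degree mu)"
    using st by (simp_all add: bm_mu_def bm_jprime_def bm_e_def)
  have c: "mu \<noteq> 0 \<and> ann s n mu \<and> Dp \<noteq> 0 \<and> -1 \<le> jp \<and> jp \<le> int n - 1 \<and>
     int (degree mu) + int (degree mup) = jp + 1 \<and> mup = bm_mu_int s eps jp \<and>
     (0 \<le> jp \<longrightarrow> ann s (nat jp) mup \<and> EE s mup (jp + 1 - int (degree mup)) = Dp) \<and>
     (\<forall>h. h \<noteq> 0 \<longrightarrow> ann s n h \<longrightarrow> degree mu \<le> degree h)"
    using I unfolding inv_def st prod.case .
  from c have b: "mu \<noteq> 0" "ann s n mu" "Dp \<noteq> 0" "-1 \<le> jp" "jp \<le> int n - 1"
    "int (degree mu) + int (degree mup) = jp + 1" "mup = bm_mu_int s eps jp"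
    "0 \<le> jp \<longrightarrow> ann s (nat jp) mup \<and> EE s mup (jp + 1 - int (degree mup)) = Dp"
    "\<forall>h. h \<noteq> 0 \<longrightarrow> ann s n h \<longrightarrow> degree mu \<le> degree h"
    by blast+
  show ?thesis
    apply (rule that[of mu jp mup Dp])
    using a b by simp_all
qed

lemma part1:
  fixes s :: "nat \<Rightarrow> 'a::idom" and g :: "'a poly"
  assumes gc: "g = 0 \<or> int (degree g) \<le> - bm_e s eps n"
  shows "bm_mu s eps n + g * bm_mu_int s eps (bm_jprime s eps n) \<in> MinPolys s n"
proof -
  obtain mu jp mup Dp where F: "bm_mu s eps n = mu" "bm_jprime s eps n = jp"
    "bm_mu_int s eps jp = mup" "bm_e s eps n = int n + 1 - 2 * int (degree mu)"
    and munz: "mu \<noteq> 0" and amu: "ann s n mu" and Dpnz: "Dp \<noteq> 0" and jpm: "-1 \<le> jp" and jpn: "jp \<le> int n - 1"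
    and dsum: "int (degree mu) + int (degree mup) = jp + 1"
    and mupI: "0 \<le> jp \<longrightarrow> ann s (nat jp) mup \<and> EE s mup (jp + 1 - int (degree mup)) = Dp"
    and minim: "\<And>h. h \<noteq> 0 \<Longrightarrow> ann s n h \<Longrightarrow> degree mu \<le> degree h"
    by (rule state_facts[of s eps n]) blast
  define nu where "nu = mu + g * mup"
  have key: "nu \<noteq> 0 \<and> degree nu = degree mu \<and> ann s n nu"
  proof (cases "g = 0")
    case True then show ?thesis using munz amu by (simp add: nu_def)
  next
    case gnz: False
    with gc F have dg: "int (degree g) \<le> 2 * int (degree mu) - int n - 1" by simp
    have jp0: "0 \<le> jp" using dg dsum jpm by linarith
    have "degree (g * mup) \<le> degree g + degree mup" by (rule degree_mult_le)
    then have dgm: "degree (g * mup) < degree mu" using dg dsum jpn by linarith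
    then have dn: "degree nu = degree mu" unfolding nu_def by (rule degree_add_eq_left)
    have nnz: "nu \<noteq> 0" using dn dgm by auto
    have amup: "ann s (nat jp) mup" using mupI jp0 by simp
    have "ann s n nu" unfolding ann_def
    proof (intro allI impI)
      fix t assume t: "degree nu + 1 \<le> t \<and> t \<le> n"
      have z1: "EE s mu (int t - int (degree mu)) = 0" using amu t dn by (simp add: ann_def)
      have z2: "EE s (g * mup) (int t - int (degree mu)) = 0"
      proof (rule EE_mult_zero)
        fix k assume k: "k \<le> degree g"
        define t' where "t' = nat (int t - int (degree mu) + int k + int (degree mup))"
        have "degree mup + 1 \<le> t' \<and> t' \<le> nat jp" using t dn k dg dsum unfolding t'_def by linarith
        then have "EE s mup (int t' - int (degree mup)) = 0" using amup by (simp add: ann_def)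
        moreover have "int t' - int (degree mup) = int t - int (degree mu) + int k"
          using t dn unfolding t'_def by linarith
        ultimately show "EE s mup (int t - int (degree mu) + int k) = 0" by simp
      qed
      show "EE s nu (int t - int (degree nu)) = 0" using z1 z2 dn by (simp add: nu_def EE_add)
    qed
    then show ?thesis using nnz dn by simp
  qed
  have "nu \<in> MinPolys s n"
    unfolding MinPolys_def using key minim by (auto simp: annihilator_iff)
  then show ?thesis using F by (simp add: nu_def)
qed

theorem mainTheorem7:
  fixes s :: "nat \<Rightarrow> 'a::idom" and eps :: 'a and n :: nat and g :: "'a poly"
  assumes "n \<ge> 1"
  shows "((g = 0 \<or> int (degree g) \<le> - bm_e s eps n) \<longrightarrow>
            bm_mu s eps n + g * bm_mu_int s eps (bm_jprime s eps n) \<in> MinPolys s n)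
       \<and> (bm_e s eps n \<le> 0 \<longrightarrow>
            (\<exists>f h. f \<in> MinPolys s n \<and> h \<in> MinPolys s n \<and> f \<noteq> h))"
proof (intro conjI impI)
  assume "g = 0 \<or> int (degree g) \<le> - bm_e s eps n"
  then show "bm_mu s eps n + g * bm_mu_int s eps (bm_jprime s eps n) \<in> MinPolys s n"
    by (rule part1)
next
  assume en: "bm_e s eps n \<le> 0"
  obtain mu jp mup Dp where F: "bm_mu s eps n = mu" "bm_jprime s eps n = jp"
    "bm_mu_int s eps jp = mup" "bm_e s eps n = int n + 1 - 2 * int (degree mu)"
    and Dpnz: "Dp \<noteq> 0" and jpm: "-1 \<le> jp"
    and dsum: "int (degree mu) + int (degree mup) = jp + 1"
    and mupI: "0 \<le> jp \<longrightarrow> ann s (nat jp) mup \<and> EE s mup (jp + 1 - int (degree mup)) = Dp"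
    by (rule state_facts[of s eps n]) blast
  have jp0: "0 \<le> jp" using en F(4) dsum by linarith
  have mupnz: "mup \<noteq> 0" using mupI jp0 Dpnz by auto
  have m1: "bm_mu s eps n + 0 * bm_mu_int s eps (bm_jprime s eps n) \<in> MinPolys s n"
    by (rule part1) simp
  have m2: "bm_mu s eps n + 1 * bm_mu_int s eps (bm_jprime s eps n) \<in> MinPolys s n"
    by (rule part1) (use en in simp)
  show "\<exists>f h. f \<in> MinPolys s n \<and> h \<in> MinPolys s n \<and> f \<noteq> h"
    using m1 m2 mupnz F by fastforce
qed

end
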